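(* Every Brauer field is semi-perfect.
   Context: A field $k$ is a Brauer field if for every $d\ge 1$ there is a number $N_k(d)$ such that every equation $a_1x_1^d+\cdots+a_nx_n^d=0$ with $n>N_k(d)$ and $a_i\in k$ has a non-trivial solution in $k^n$. A field $k$ is semi-perfect if it has characteristic $0$, or it has characteristic $p>0$ and the degree $[k:k^{p^n}]$ is finite for all $n\ge 1$. *)

theory Defs
  imports Main
begin

definition brauer_field :: "'a::field itself \<Rightarrow> bool" where
  "brauer_field _ \<longleftrightarrow>
     (\<forall>d::nat. d \<ge> 1 \<longrightarrow> (\<exists>N::nat. \<forall>n>N. \<forall>a::nat \<Rightarrow> 'a.
        \<exists>x::nat \<Rightarrow> 'a. (\<exists>i<n. x i \<noteq> 0) \<and> (\<Sum>i<n. a i * x i ^ d) = 0))"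

definition pow_subfield :: "nat \<Rightarrow> 'a::field set" where
  "pow_subfield m = {y. \<exists>x. y = x ^ m}"

text \<open>[k : F] finite: k is a finite-dimensional vector space over the subfield F,
  i.e. there is a finite spanning set S with coefficients in F.\<close>
definition finite_degree_over :: "'a::field set \<Rightarrow> bool" where
  "finite_degree_over F \<longleftrightarrow>
     (\<exists>S::'a set. finite S \<and> (\<forall>z. \<exists>c. (\<forall>s\<in>S. c s \<in> F) \<and> z = (\<Sum>s\<in>S. c s * s)))"

definition semi_perfect :: "'a::field itself \<Rightarrow> bool" where
  "semi_perfect _ \<longleftrightarrow>
     CHAR('a) = 0 \<or>
     (CHAR('a) > 0 \<and> (\<forall>n::nat. n \<ge> 1 \<longrightarrow> finite_degree_over (pow_subfield (CHAR('a) ^ n) :: 'a set)))"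

end

theory Submission
  imports Defs "HOL-Computational_Algebra.Euclidean_Algorithm" "HOL-Computational_Algebra.Primes"
begin

definition indep_over :: "'a::field set \<Rightarrow> 'a set \<Rightarrow> bool" where
  "indep_over F S \<longleftrightarrow> (\<forall>c. (\<forall>s\<in>S. c s \<in> F) \<and> (\<Sum>s\<in>S. c s * s) = 0 \<longrightarrow> (\<forall>s\<in>S. c s = 0))"

lemma span_lemma:
  fixes F :: "'a::field set"
  assumes F0: "0 \<in> F" and F1: "1 \<in> F"
    and Fcl: "\<And>a b. a \<in> F \<Longrightarrow> b \<in> F \<Longrightarrow> - (a / b) \<in> F"
    and bound: "\<And>S. finite S \<Longrightarrow> indep_over F S \<Longrightarrow> card S \<le> N"
  shows "finite_degree_over F"
proof -
  define I where "I = {S. finite S \<and> indep_over F S}"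
  have emp: "{} \<in> I" unfolding I_def indep_over_def by simp
  have fin: "finite (card ` I)"
    by (rule finite_subset[of _ "{..N}"]) (auto simp: I_def bound)
  define m where "m = Max (card ` I)"
  have "m \<in> card ` I" unfolding m_def using fin emp by (intro Max_in) auto
  then obtain S where S: "S \<in> I" "card S = m" by auto
  have maxS: "\<And>T. T \<in> I \<Longrightarrow> card T \<le> m" unfolding m_def using fin by auto
  have finS: "finite S" and indS: "indep_over F S" using S unfolding I_def by auto
  show ?thesis unfolding finite_degree_over_def
  proof (intro exI[of _ S] conjI allI)
    show "finite S" by fact
    fix z :: 'a
    show "\<exists>c. (\<forall>s\<in>S. c s \<in> F) \<and> z = (\<Sum>s\<in>S. c s * s)"
    proof (cases "z \<in> S")
      case True
      have "(\<Sum>s\<in>S. (if s = z then 1 else 0) * s) = (\<Sum>s\<in>S. if s = z then z else 0)"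
        by (rule sum.cong) auto
      also have "\<dots> = z" using True finS by simp
      finally show ?thesis
        by (intro exI[of _ "\<lambda>s. if s = z then 1 else 0"]) (use F0 F1 in auto)
    next
      case False
      have "\<not> indep_over F (insert z S)"
      proof
        assume "indep_over F (insert z S)"
        hence "insert z S \<in> I" using finS unfolding I_def by auto
        hence "card (insert z S) \<le> m" by (rule maxS)
        thus False using False finS S(2) by simp
      qed
      then obtain c where c: "\<forall>s\<in>insert z S. c s \<in> F" "(\<Sum>s\<in>insert z S. c s * s) = 0"
          "\<exists>s\<in>insert z S. c s \<noteq> 0"
        unfolding indep_over_def by blast
      have sum: "c z * z + (\<Sum>s\<in>S. c s * s) = 0" using c(2) False finS by simp
      have cz: "c z \<noteq> 0"
      proof
        assume "c z = 0"
        hence "(\<Sum>s\<in>S. c s * s) = 0" using sum by simp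
        hence "\<forall>s\<in>S. c s = 0" using indS c(1) unfolding indep_over_def by blast
        thus False using c(3) \<open>c z = 0\<close> by auto
      qed
      have eq: "(\<Sum>s\<in>S. (- (c s / c z)) * s) = z"
      proof -
        have "(\<Sum>s\<in>S. (- (c s / c z)) * s) = - (1 / c z) * (\<Sum>s\<in>S. c s * s)"
          by (simp add: sum_distrib_left)
        also have "(\<Sum>s\<in>S. c s * s) = - (c z * z)" using sum by (simp add: eq_neg_iff_add_eq_0 add.commute)
        finally show ?thesis using cz by simp
      qed
      show ?thesis
        by (intro exI[of _ "\<lambda>s. - (c s / c z)"]) (use c(1) Fcl eq in auto)
    qed
  qed
qed

lemma neg_pow_CHAR:
  fixes x :: "'a::field"
  assumes "CHAR('a) > 0"
  shows "(-x) ^ (CHAR('a) ^ n) = - (x ^ (CHAR('a) ^ n))"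
proof (induction n)
  case 0 then show ?case by simp
next
  case (Suc n)
  have pr: "prime CHAR('a)" using assms by (rule prime_CHAR_semidom)
  have "(-x) ^ (CHAR('a) ^ Suc n) = ((-x) ^ (CHAR('a) ^ n)) ^ CHAR('a)"
    by (simp only: power_mult power_Suc2)
  also have "\<dots> = (- (x ^ (CHAR('a) ^ n))) ^ CHAR('a)" using Suc by simp
  also have "\<dots> = - ((x ^ (CHAR('a) ^ n)) ^ CHAR('a))"
    by (rule minus_power_prime_CHAR[OF refl pr])
  also have "\<dots> = - (x ^ (CHAR('a) ^ Suc n))"
    by (simp only: power_mult power_Suc2)
  finally show ?case .
qed

lemma dep_lemma:
  fixes S :: "'a::field set"
  assumes N: "\<forall>n>N. \<forall>a::nat \<Rightarrow> 'a. \<exists>x::nat \<Rightarrow> 'a. (\<exists>i<n. x i \<noteq> 0) \<and> (\<Sum>i<n. a i * x i ^ q) = 0"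
    and fin: "finite S" and card: "card S > N"
  shows "\<not> indep_over (pow_subfield q) S"
proof
  assume ind: "indep_over (pow_subfield q) S"
  define m where "m = card S"
  obtain h where h: "bij_betw h {0..<m} S" using ex_bij_betw_nat_finite[OF fin] m_def by auto
  obtain x where x: "\<exists>i<m. x i \<noteq> 0" "(\<Sum>i<m. h i * x i ^ q) = 0"
    using N card m_def by blast
  define c where "c s = x (inv_into {0..<m} h s) ^ q" for s
  have ch: "c (h i) = x i ^ q" if "i < m" for i
    using h that unfolding c_def bij_betw_def by (simp add: inv_into_f_f)
  have "(\<Sum>s\<in>S. c s * s) = (\<Sum>i\<in>{0..<m}. c (h i) * h i)"
    using sum.reindex_bij_betw[OF h, of "\<lambda>s. c s * s"] by simp
  also have "\<dots> = (\<Sum>i<m. h i * x i ^ q)"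
    by (rule sum.cong) (auto simp: ch mult.commute)
  finally have "(\<Sum>s\<in>S. c s * s) = 0" using x(2) by simp
  moreover have "\<forall>s\<in>S. c s \<in> pow_subfield q" unfolding c_def pow_subfield_def by auto
  ultimately have z: "\<forall>s\<in>S. c s = 0" using ind unfolding indep_over_def by blast
  obtain i where i: "i < m" "x i \<noteq> 0" using x(1) by blast
  have "h i \<in> S" using h i(1) unfolding bij_betw_def by auto
  hence "x i ^ q = 0" using z ch[OF i(1)] by simp
  thus False using i(2) by simp
qed

theorem proposition2p9:
  assumes "brauer_field TYPE('k::field)"
  shows "semi_perfect TYPE('k)"
proof (cases "CHAR('k) = 0")
  case True then show ?thesis unfolding semi_perfect_def by simp
next
  case False
  hence pos: "CHAR('k) > 0" by simp
  have "finite_degree_over (pow_subfield (CHAR('k) ^ n) :: 'k set)" if n: "n \<ge> 1" for n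
  proof -
    define q where "q = CHAR('k) ^ n"
    have q1: "q \<ge> 1" unfolding q_def using pos by simp
    obtain N where N: "\<forall>n>N. \<forall>a::nat \<Rightarrow> 'k. \<exists>x::nat \<Rightarrow> 'k. (\<exists>i<n. x i \<noteq> 0) \<and> (\<Sum>i<n. a i * x i ^ q) = 0"
      using assms q1 unfolding brauer_field_def by blast
    have "finite_degree_over (pow_subfield q :: 'k set)"
    proof (rule span_lemma[where N = N])
      show "0 \<in> (pow_subfield q :: 'k set)" unfolding pow_subfield_def using q1
        by (intro CollectI exI[of _ 0]) simp
      show "1 \<in> (pow_subfield q :: 'k set)" unfolding pow_subfield_def
        by (intro CollectI exI[of _ 1]) simp
      show "- (a / b) \<in> (pow_subfield q :: 'k set)" if ha: "a \<in> pow_subfield q" and hb: "b \<in> pow_subfield q" for a b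
      proof -
        obtain u where u: "a = u ^ q" using ha unfolding pow_subfield_def by blast
        obtain v where v: "b = v ^ q" using hb unfolding pow_subfield_def by blast
        from u v have "- (a / b) = (- (u / v)) ^ q" unfolding q_def
          by (simp add: neg_pow_CHAR[OF pos] power_divide)
        thus ?thesis unfolding pow_subfield_def by auto
      qed
      show "card S \<le> N" if "finite S" "indep_over (pow_subfield q) S" for S :: "'k set"
        using dep_lemma[OF N that(1)] that(2) by fastforce
    qed
    thus ?thesis unfolding q_def .
  qed
  thus ?thesis unfolding semi_perfect_def using pos by simp
qed

end
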